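(* For every $\delta^0$-maderian digraph $F$, $\mathrm{mad}_{\vec{\chi}}(F)\leq \mathrm{mad}_{\delta^0}(F)+1$.
   Context: $\vec{\chi}(D)$ is the dichromatic number (least $k$ such that $V(D)$ partitions into $k$ sets inducing acyclic subdigraphs); $\delta^0(D)=\min\{\delta^+(D),\delta^-(D)\}$ (minimum of minimum out- and in-degree). A subdivision of $F$ is obtained by replacing each arc $(x,y)$ by a directed $(x,y)$-path, internally disjoint with new internal vertices. For a parameter $\gamma$, $F$ is $\gamma$-maderian if some integer $c$ exists such that every digraph $D$ with $\gamma(D)\ge c$ contains a subdivision of $F$ as a subdigraph; $\mathrm{mad}_\gamma(F)$ is the least such $c$. *)

theory Defs
  imports Main
begin

text \<open>A (finite, loopless, simple) digraph is a pair (V, A) of a finite vertex set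
and an arc set A \<subseteq> V \<times> V without loops. Digons (both (u,v) and (v,u)) are allowed.\<close>

type_synonym 'a dg = "'a set \<times> ('a \<times> 'a) set"

definition verts :: "'a dg \<Rightarrow> 'a set" where "verts D = fst D"
definition arcs :: "'a dg \<Rightarrow> ('a \<times> 'a) set" where "arcs D = snd D"

definition wf_digraph :: "'a dg \<Rightarrow> bool" where
  "wf_digraph D \<longleftrightarrow> finite (verts D) \<and> arcs D \<subseteq> verts D \<times> verts D
      \<and> (\<forall>v. (v, v) \<notin> arcs D)"

definition min_outdeg :: "'a dg \<Rightarrow> nat" where
  "min_outdeg D = (if verts D = {} then 0
     else Min ((\<lambda>v. card {w. (v, w) \<in> arcs D}) ` verts D))"

definition min_indeg :: "'a dg \<Rightarrow> nat" where
  "min_indeg D = (if verts D = {} then 0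
     else Min ((\<lambda>v. card {u. (u, v) \<in> arcs D}) ` verts D))"

definition delta0 :: "'a dg \<Rightarrow> nat" where
  "delta0 D = min (min_outdeg D) (min_indeg D)"

definition dichromatic :: "'a dg \<Rightarrow> nat" where
  "dichromatic D = (LEAST k. \<exists>c :: 'a \<Rightarrow> nat.
      (\<forall>v\<in>verts D. c v < k) \<and>
      (\<forall>i. acyclic {(u, v) \<in> arcs D. u \<in> verts D \<and> v \<in> verts D \<and> c u = i \<and> c v = i}))"

definition is_dpath :: "'a dg \<Rightarrow> 'a list \<Rightarrow> bool" where
  "is_dpath D p \<longleftrightarrow> p \<noteq> [] \<and> distinct p \<and> set p \<subseteq> verts D
      \<and> (\<forall>i. Suc i < length p \<longrightarrow> (p ! i, p ! Suc i) \<in> arcs D)"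

definition inner :: "'a list \<Rightarrow> 'a list" where
  "inner p = butlast (tl p)"

definition contains_subdivision :: "'a dg \<Rightarrow> 'b dg \<Rightarrow> bool" where
  "contains_subdivision F D \<longleftrightarrow> (\<exists>(f :: 'a \<Rightarrow> 'b) (P :: 'a \<times> 'a \<Rightarrow> 'b list).
      inj_on f (verts F) \<and> f ` verts F \<subseteq> verts D \<and>
      (\<forall>a\<in>arcs F. is_dpath D (P a) \<and> hd (P a) = f (fst a) \<and> last (P a) = f (snd a)
                   \<and> set (inner (P a)) \<inter> f ` verts F = {}) \<and>
      (\<forall>a\<in>arcs F. \<forall>b\<in>arcs F. a \<noteq> b \<longrightarrow> set (inner (P a)) \<inter> set (P b) = {}))"

text \<open>gamma-maderian and mad. Host digraphs range over all finite digraphs, represented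
with vertices in nat (every finite digraph is isomorphic to one of these).\<close>
definition maderian :: "(nat dg \<Rightarrow> nat) \<Rightarrow> 'a dg \<Rightarrow> bool" where
  "maderian \<gamma> F \<longleftrightarrow> (\<exists>c. \<forall>D :: nat dg. wf_digraph D \<and> \<gamma> D \<ge> c \<longrightarrow> contains_subdivision F D)"

definition mad :: "(nat dg \<Rightarrow> nat) \<Rightarrow> 'a dg \<Rightarrow> nat" where
  "mad \<gamma> F = (LEAST c. \<forall>D :: nat dg. wf_digraph D \<and> \<gamma> D \<ge> c \<longrightarrow> contains_subdivision F D)"

end

theory Submission
  imports Defs
begin

definition colorable :: "'a dg \<Rightarrow> nat \<Rightarrow> bool" where
  "colorable D k \<longleftrightarrow> (\<exists>c :: 'a \<Rightarrow> nat.
      (\<forall>v\<in>verts D. c v < k) \<and>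
      (\<forall>i. acyclic {(u, v) \<in> arcs D. u \<in> verts D \<and> v \<in> verts D \<and> c u = i \<and> c v = i}))"

definition ind :: "'a dg \<Rightarrow> 'a set \<Rightarrow> 'a dg" where
  "ind D S = (S, {(u,v) \<in> arcs D. u \<in> S \<and> v \<in> S})"

lemma ind_simps[simp]: "verts (ind D S) = S" "arcs (ind D S) = {(u,v) \<in> arcs D. u \<in> S \<and> v \<in> S}"
  by (simp_all add: ind_def verts_def arcs_def)

lemma not_colorable:
  assumes "dichromatic D \<ge> k + 1" shows "\<not> colorable D k"
proof
  assume "colorable D k"
  hence "dichromatic D \<le> k" unfolding dichromatic_def colorable_def by (rule Least_le)
  with assms show False by simp
qed

lemma acyc_aux:
  assumes a0: "acyclic R0"
    and nout: "\<And>w. (v, w) \<notin> R"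
    and sub: "\<And>x y. (x, y) \<in> R \<Longrightarrow> x \<noteq> v \<Longrightarrow> y \<noteq> v \<Longrightarrow> (x, y) \<in> R0"
  shows "acyclic R"
proof -
  have key: "(x, y) \<in> R0\<^sup>+" if "(x, y) \<in> R\<^sup>+" "y \<noteq> v" for x y
    using that
  proof (induction rule: trancl_induct)
    case (base y)
    then have "x \<noteq> v" using nout by auto
    with base show ?case using sub by auto
  next
    case (step y z)
    then have "y \<noteq> v" using nout by auto
    with step show ?case using sub by (meson trancl.simps)
  qed
  show ?thesis unfolding acyclic_def
  proof
    fix x show "(x, x) \<notin> R\<^sup>+"
    proof
      assume h: "(x, x) \<in> R\<^sup>+"
      show False
      proof (cases "x = v")
        case True
        from h obtain y where "(x, y) \<in> R" by (meson tranclD)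
        with True nout show False by auto
      next
        case False
        with key[OF h] a0 show False unfolding acyclic_def by auto
      qed
    qed
  qed
qed

lemma degree_bound:
  assumes wf: "wf_digraph D"
    and S: "S \<subseteq> verts D" "\<not> colorable (ind D S) k"
    and minS: "\<And>T. T \<subset> S \<Longrightarrow> colorable (ind D T) k"
    and vS: "v \<in> S"
    and rev: "b \<longrightarrow> R = (\<lambda>x. x)" "\<not> b \<longrightarrow> R = converse"
  shows "card {w. (v, w) \<in> R (arcs (ind D S))} \<ge> k"
proof (rule ccontr)
  assume lt: "\<not> ?thesis"
  let ?N = "{w. (v, w) \<in> R (arcs (ind D S))}"
  have finS: "finite S" using wf S unfolding wf_digraph_def by (meson finite_subset)
  have finN: "finite ?N"
  proof (rule finite_subset[OF _ finS])
    show "?N \<subseteq> S" using rev by (cases b) auto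
  qed
  have "card (c ` ?N) < k" for c :: "'a \<Rightarrow> nat"
    using card_image_le[OF finN, of c] lt by simp
  from minS[of "S - {v}"] vS obtain c where
    cb: "\<forall>u\<in>S - {v}. c u < k" and
    ca: "\<forall>i. acyclic {(u, w) \<in> arcs (ind D (S - {v})). u \<in> S - {v} \<and> w \<in> S - {v} \<and> c u = i \<and> c w = i}"
    unfolding colorable_def by auto
  have "card (c ` ?N) < card {..<k}"
    using card_image_le[OF finN, of c] lt by simp
  hence "\<not> {..<k} \<subseteq> c ` ?N" using card_mono[OF finite_imageI[OF finN], of "{..<k}" c] by linarith
  then obtain j where j: "j < k" "j \<notin> c ` ?N" by auto
  define c' where "c' = c(v := j)"
  have "colorable (ind D S) k"
    unfolding colorable_def
  proof (intro exI[of _ c'] conjI allI ballI)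
    fix u assume "u \<in> verts (ind D S)" thus "c' u < k" using cb j by (auto simp: c'_def)
  next
    fix i
    let ?R = "{(u, w) \<in> arcs (ind D S). u \<in> verts (ind D S) \<and> w \<in> verts (ind D S) \<and> c' u = i \<and> c' w = i}"
    let ?Q = "{(u, w) \<in> arcs (ind D (S - {v})). u \<in> S - {v} \<and> w \<in> S - {v} \<and> c u = i \<and> c w = i}"
    have noloop: "(x, x) \<notin> arcs D" for x using wf unfolding wf_digraph_def by auto
    show "acyclic ?R"
    proof (cases b)
      case True
      hence RR: "R = (\<lambda>x. x)" using rev by auto
      show ?thesis
      proof (rule acyc_aux[OF ca[rule_format, of i], of v])
        fix w show "(v, w) \<notin> ?R"
        proof
          assume h: "(v, w) \<in> ?R"
          hence "w \<noteq> v" using noloop by auto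
          with h have "c w = j" "w \<in> ?N" by (auto simp: c'_def RR)
          with j show False by auto
        qed
      next
        fix x y assume "(x, y) \<in> ?R" "x \<noteq> v" "y \<noteq> v"
        thus "(x, y) \<in> ?Q" by (auto simp: c'_def)
      qed
    next
      case False
      hence RR: "R = converse" using rev by auto
      have "acyclic (?R\<inverse>)"
      proof (rule acyc_aux[OF ca[rule_format, of i, THEN acyclic_converse[THEN iffD2]], of v])
        fix w show "(v, w) \<notin> ?R\<inverse>"
        proof
          assume h: "(v, w) \<in> ?R\<inverse>"
          hence "w \<noteq> v" using noloop by auto
          with h have "c w = j" "w \<in> ?N" by (auto simp: c'_def RR)
          with j show False by auto
        qed
      next
        fix x y assume "(x, y) \<in> ?R\<inverse>" "x \<noteq> v" "y \<noteq> v"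
        thus "(x, y) \<in> ?Q\<inverse>" by (auto simp: c'_def)
      qed
      thus ?thesis by simp
    qed
  qed
  with S show False by simp
qed

lemma exists_dense:
  assumes wf: "wf_digraph D" and dc: "dichromatic D \<ge> k + 1"
  shows "\<exists>S \<subseteq> verts D. delta0 (ind D S) \<ge> k"
proof -
  let ?P = "\<lambda>S. S \<subseteq> verts D \<and> \<not> colorable (ind D S) k"
  have vD: "ind D (verts D) = D" using wf unfolding wf_digraph_def ind_def verts_def arcs_def
    by (cases D) auto
  have "?P (verts D)" using not_colorable[OF dc] vD by simp
  then obtain S where PS: "?P S" and minS0: "\<And>T. ?P T \<Longrightarrow> card S \<le> card T"
    using ex_has_least_nat[of ?P "verts D" card] by auto
  have finS: "finite S" using wf PS unfolding wf_digraph_def by (meson finite_subset)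
  have minS: "colorable (ind D T) k" if "T \<subset> S" for T
  proof (rule ccontr)
    assume "\<not> colorable (ind D T) k"
    with that PS have "card S \<le> card T" using minS0 by auto
    moreover have "card T < card S" using psubset_card_mono[OF finS that] .
    ultimately show False by simp
  qed
  have Sne: "S \<noteq> {}"
  proof
    assume "S = {}"
    hence "colorable (ind D S) k" unfolding colorable_def by (auto simp: acyclic_def)
    with PS show False by simp
  qed
  have o: "card {w. (v, w) \<in> arcs (ind D S)} \<ge> k" if "v \<in> S" for v
    using degree_bound[OF wf _ _ minS that, of True "\<lambda>x. x"] PS by auto
  have i: "card {w. (v, w) \<in> converse (arcs (ind D S))} \<ge> k" if "v \<in> S" for v
    using degree_bound[OF wf _ _ minS that, of False converse] PS by auto
  have "min_outdeg (ind D S) \<ge> k"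
    unfolding min_outdeg_def using Sne finS o by (simp add: Min_ge_iff)
  moreover have "min_indeg (ind D S) \<ge> k"
    unfolding min_indeg_def using Sne finS i by (simp add: Min_ge_iff)
  ultimately show ?thesis using PS unfolding delta0_def by auto
qed

lemma subdiv_mono:
  assumes "contains_subdivision F (ind D S)" "S \<subseteq> verts D"
  shows "contains_subdivision F D"
proof -
  have dp: "is_dpath D p" if "is_dpath (ind D S) p" for p
    using that assms(2) unfolding is_dpath_def by auto
  from assms(1) show ?thesis unfolding contains_subdivision_def
    using dp assms(2) by (metis ind_simps(1) subset_trans)
qed

lemma wf_ind: "wf_digraph D \<Longrightarrow> S \<subseteq> verts D \<Longrightarrow> wf_digraph (ind D S)"
  unfolding wf_digraph_def by (auto intro: finite_subset)

theorem corollary34: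
  fixes F :: "'a dg"
  assumes "wf_digraph F"
    and "maderian delta0 F"
  shows "maderian dichromatic F \<and> mad dichromatic F \<le> mad delta0 F + 1"
proof -
  let ?m = "mad delta0 F"
  have H: "\<forall>D :: nat dg. wf_digraph D \<and> delta0 D \<ge> ?m \<longrightarrow> contains_subdivision F D"
    using assms(2) unfolding maderian_def mad_def by (rule LeastI_ex)
  have G: "\<forall>D :: nat dg. wf_digraph D \<and> dichromatic D \<ge> ?m + 1 \<longrightarrow> contains_subdivision F D"
  proof (intro allI impI, elim conjE)
    fix D :: "nat dg" assume wf: "wf_digraph D" and dc: "dichromatic D \<ge> ?m + 1"
    obtain S where S: "S \<subseteq> verts D" "delta0 (ind D S) \<ge> ?m" using exists_dense[OF wf dc] by auto
    have "contains_subdivision F (ind D S)" using H wf_ind[OF wf S(1)] S(2) by blast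
    thus "contains_subdivision F D" using subdiv_mono S(1) by blast
  qed
  show ?thesis
  proof
    show "maderian dichromatic F" unfolding maderian_def using G by blast
    have "mad dichromatic F \<le> ?m + 1" unfolding mad_def[of dichromatic] using G by (rule Least_le)
    thus "mad dichromatic F \<le> ?m + 1" .
  qed
qed

end
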